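(* Let $\alpha\in[0,1]$, let $\mathbf X\in\mathbb R^{d\times n}$, $\mathbf V\in\mathbb R^{m\times d}$, $\mathbf W\in\mathbb R^{k\times m}$, and for $i=1,\dots,m$ let $\boldsymbol\Lambda^i\in\mathbb R^{n\times n}$ be diagonal with $(\boldsymbol\Lambda^i)_{jj}=\sigma'((\mathbf V_{i\bullet}\mathbf X)_j)$, where $\sigma(z)=\max\{\alpha z,z\}$ is the Leaky-ReLU and $\sigma'$ takes values in $\{\alpha,1\}$ (any choice in $\{\alpha,1\}$ at $z=0$). Define $$\boldsymbol\Gamma=\sum_{i=1}^m\boldsymbol\Lambda^i\mathbf X^\top\mathbf V_{i\bullet}^\top\mathbf V_{i\bullet}\mathbf X\boldsymbol\Lambda^i,\qquad \widehat{\mathbf G}_O=\sum_{i=1}^m\boldsymbol\Lambda^i\mathbf X^\top\mathbf X\boldsymbol\Lambda^i\otimes\mathbf W_{\bullet i}\mathbf W_{\bullet i}^\top+\boldsymbol\Gamma\otimes\mathbf I_k\in\mathbb R^{kn\times kn}.$$ If $\alpha^2\sigma_{\min}^2(\mathbf X)\sigma_{\min}^2(\mathbf W)+\lambda_{\min}(\boldsymbol\Gamma)>0$, then $\widehat{\mathbf G}_O$ is positive definite and $$\kappa(\widehat{\mathbf G}_O)\le\frac{\sigma_{\max}^2(\mathbf X)\,\sigma_{\max}^2(\mathbf W)+\lambda_{\max}(\boldsymbol\Gamma)}{\alpha^2\,\sigma_{\min}^2(\mathbf X)\,\sigma_{\min}^2(\mathbf W)+\lambda_{\min}(\boldsymb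ol\Gamma)}.$$
   Context: $\mathbf X$ is the data matrix with columns the $n$ inputs; $\mathbf V_{i\bullet}$ is the $i$-th row of $\mathbf V$ and $\mathbf W_{\bullet i}$ the $i$-th column of $\mathbf W$; $\widehat{\mathbf G}_O$ has the same nonzero eigenvalues as the Gauss–Newton matrix of $F(\mathbf x)=\mathbf W\sigma(\mathbf V\mathbf x)$. Conventions: $\sigma_{\max}^2(\mathbf X)=\lambda_{\max}(\mathbf X^\top\mathbf X)$, $\sigma_{\min}^2(\mathbf X)=\lambda_{\min}(\mathbf X^\top\mathbf X)$, $\sigma_{\max}^2(\mathbf W)=\lambda_{\max}(\mathbf W\mathbf W^\top)$, $\sigma_{\min}^2(\mathbf W)=\lambda_{\min}(\mathbf W\mathbf W^\top)$. For a symmetric positive definite matrix, $\kappa=\lambda_{\max}/\lambda_{\min}$. $\otimes$ is the Kronecker product. *)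

theory Defs
  imports "HOL-Analysis.Analysis"
begin

definition mat_eigenvalue :: "real^'n^'n \<Rightarrow> real \<Rightarrow> bool" where
  "mat_eigenvalue A \<mu> \<longleftrightarrow> (\<exists>v. v \<noteq> 0 \<and> A *v v = \<mu> *\<^sub>R v)"

text \<open>Largest / smallest (real) eigenvalue; intended for symmetric matrices,
  whose eigenvalues are all real.\<close>
definition lambda_max :: "real^'n^'n \<Rightarrow> real" where
  "lambda_max A = Max {\<mu>. mat_eigenvalue A \<mu>}"

definition lambda_min :: "real^'n^'n \<Rightarrow> real" where
  "lambda_min A = Min {\<mu>. mat_eigenvalue A \<mu>}"

definition symmetric_mat :: "real^'n^'n \<Rightarrow> bool" where
  "symmetric_mat A \<longleftrightarrow> transpose A = A"

definition pos_def :: "real^'n^'n \<Rightarrow> bool" where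
  "pos_def A \<longleftrightarrow> symmetric_mat A \<and> (\<forall>x. x \<noteq> 0 \<longrightarrow> x \<bullet> (A *v x) > 0)"

definition cond_num :: "real^'n^'n \<Rightarrow> real" where
  "cond_num A = lambda_max A / lambda_min A"

text \<open>Squared extreme singular values, by the paper's conventions:
  for X (d x n): sigma^2(X) from X^T X; for W (k x m): sigma^2(W) from W W^T.\<close>
definition sigma_max_sq_X :: "real^'n^'d \<Rightarrow> real" where
  "sigma_max_sq_X X = lambda_max (transpose X ** X)"
definition sigma_min_sq_X :: "real^'n^'d \<Rightarrow> real" where
  "sigma_min_sq_X X = lambda_min (transpose X ** X)"
definition sigma_max_sq_W :: "real^'m^'k \<Rightarrow> real" where
  "sigma_max_sq_W W = lambda_max (W ** transpose W)"
definition sigma_min_sq_W :: "real^'m^'k \<Rightarrow> real" where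
  "sigma_min_sq_W W = lambda_min (W ** transpose W)"

text \<open>Kronecker product; the row/column index of A \<otimes> B is the pair (i,a),
  corresponding to the index (i-1)k + a of the paper.\<close>
definition kron :: "real^'n^'n \<Rightarrow> real^'k^'k \<Rightarrow> real^('n \<times> 'k)^('n \<times> 'k)" where
  "kron A B = (\<chi> p q. A $ fst p $ fst q * B $ snd p $ snd q)"

definition outer :: "real^'a \<Rightarrow> real^'a^'a" where
  "outer u = (\<chi> i j. u $ i * u $ j)"

definition diag_mat :: "real^'n \<Rightarrow> real^'n^'n" where
  "diag_mat s = (\<chi> i j. if i = j then s $ i else 0)"

definition leaky_relu :: "real \<Rightarrow> real \<Rightarrow> real" where
  "leaky_relu \<alpha> z = max (\<alpha> * z) z"

definition leaky_relu_deriv_choice :: "real \<Rightarrow> real \<Rightarrow> real \<Rightarrow> bool" where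
  "leaky_relu_deriv_choice \<alpha> z s \<longleftrightarrow>
     s \<in> {\<alpha>, 1} \<and> (z > 0 \<longrightarrow> s = 1) \<and> (z < 0 \<longrightarrow> s = \<alpha>)"

end

theory Submission
  imports Defs
begin


lemma sym_entries: "symmetric_mat A \<longleftrightarrow> (\<forall>i j. A$i$j = A$j$i)"
  unfolding symmetric_mat_def transpose_def vec_eq_iff by auto

lemma sym_inner: "symmetric_mat A \<Longrightarrow> x \<bullet> (A *v y) = (A *v x) \<bullet> y"
  by (metis dot_lmul_matrix symmetric_mat_def transpose_matrix_vector inner_commute)

lemma eig_finite:
  assumes S: "symmetric_mat (A::real^'n^'n)"
  shows "finite {\<mu>. mat_eigenvalue A \<mu>}"
proof -
  define E where "E = {\<mu>. mat_eigenvalue A \<mu>}"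
  define ev where "ev \<mu> = (SOME v. v \<noteq> 0 \<and> A *v v = \<mu> *\<^sub>R v)" for \<mu>
  have ev: "ev \<mu> \<noteq> 0 \<and> A *v ev \<mu> = \<mu> *\<^sub>R ev \<mu>" if "\<mu> \<in> E" for \<mu>
    using that unfolding E_def mat_eigenvalue_def ev_def by (metis (mono_tags, lifting) mem_Collect_eq someI_ex)
  have inj: "inj_on ev E"
  proof (rule inj_onI)
    fix a b assume a: "a \<in> E" and b: "b \<in> E" and e: "ev a = ev b"
    have "a *\<^sub>R ev a = b *\<^sub>R ev a" using ev[OF a] ev[OF b] e by metis
    then show "a = b" using ev[OF a] by (simp add: scaleR_cancel_right)
  qed
  have orth: "pairwise orthogonal (ev ` E)"
  proof (auto simp: pairwise_def)
    fix a b assume a: "a \<in> E" and b: "b \<in> E" and ne: "ev a \<noteq> ev b"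
    have "a \<noteq> b" using ne by auto
    have "a * (ev a \<bullet> ev b) = (A *v ev a) \<bullet> ev b" using ev[OF a] by simp
    also have "\<dots> = ev a \<bullet> (A *v ev b)" using sym_inner[OF S] by simp
    also have "\<dots> = b * (ev a \<bullet> ev b)" using ev[OF b] by simp
    finally have "(a - b) * (ev a \<bullet> ev b) = 0" by (simp add: algebra_simps)
    then show "orthogonal (ev a) (ev b)" using \<open>a \<noteq> b\<close> by (simp add: orthogonal_def)
  qed
  have "0 \<notin> ev ` E" using ev by auto
  then have "independent (ev ` E)" using orth pairwise_orthogonal_independent by blast
  then have "finite (ev ` E)" using independent_bound by blast
  then show ?thesis using inj finite_imageD unfolding E_def by blast
qed

lemma psd_zero:
  fixes B :: "real^'n^'n"
  assumes S: "symmetric_mat B" and psd: "\<And>x. x \<bullet> (B *v x) \<ge> 0" and u: "u \<bullet> (B *v u) = 0"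
  shows "B *v u = 0"
proof -
  define y where "y = B *v u"
  define b where "b = y \<bullet> (B *v u)"
  define c where "c = y \<bullet> (B *v y)"
  have c0: "c \<ge> 0" using psd unfolding c_def by simp
  have q: "2 * t * b + t^2 * c \<ge> 0" for t
  proof -
    have "(u + t *\<^sub>R y) \<bullet> (B *v (u + t *\<^sub>R y)) \<ge> 0" by (rule psd)
    moreover have "(u + t *\<^sub>R y) \<bullet> (B *v (u + t *\<^sub>R y)) = u \<bullet> (B *v u) + t * (u \<bullet> (B *v y)) + t * (y \<bullet> (B *v u)) + t^2 * c"
      by (simp add: matrix_vector_right_distrib matrix_vector_mult_scaleR inner_add_left inner_add_right c_def power2_eq_square algebra_simps)
    moreover have "u \<bullet> (B *v y) = b" using sym_inner[OF S, of u y] unfolding b_def by (simp add: inner_commute)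
    ultimately show ?thesis using u by (simp add: algebra_simps b_def)
  qed
  have "b = 0"
  proof (rule ccontr)
    assume "b \<noteq> 0"
    define t where "t = - b / (c + 1)"
    have cp: "c + 1 > 0" using c0 by simp
    have e: "(c+1)^2 * (2 * t * b + t^2 * c) = - (b^2 * (c + 2))"
    proof -
      have tc: "t*(c+1) = -b" unfolding t_def using cp by simp
      have "(c+1)^2 * (2 * t * b + t^2 * c) = 2*b*(c+1)*(t*(c+1)) + c*(t*(c+1))^2"
        by (simp add: power2_eq_square algebra_simps)
      also have "\<dots> = - (b^2 * (c + 2))" unfolding tc by (simp add: power2_eq_square algebra_simps)
      finally show ?thesis .
    qed
    have "b^2 * (c + 2) > 0" using \<open>b \<noteq> 0\<close> c0 by simp
    then have "(c+1)^2 * (2 * t * b + t^2 * c) < 0" using e by linarith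
    then have "2 * t * b + t^2 * c < 0" using cp by (simp add: mult_less_0_iff)
    then show False using q[of t] by simp
  qed
  then show ?thesis unfolding b_def y_def by simp
qed

lemma neg_mv: "(- A) *v x = - (A *v (x::real^'n))"
  by (simp add: vec_eq_iff matrix_vector_mult_def sum_negf)

lemma rayleigh_min_exists:
  fixes A :: "real^'n^'n"
  assumes S: "symmetric_mat A"
  shows "\<exists>m. mat_eigenvalue A m \<and> (\<forall>x. m * (x \<bullet> x) \<le> x \<bullet> (A *v x))"
proof -
  define f where "f x = x \<bullet> (A *v x)" for x :: "real^'n"
  have cf: "continuous_on (sphere 0 1) f" unfolding f_def by (intro continuous_intros)
  obtain i :: 'n where True by simp
  have ne: "sphere (0::real^'n) 1 \<noteq> {}" using norm_axis_1[of i] by (metis mem_sphere_0 empty_iff)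
  obtain u where u: "u \<in> sphere 0 1" and umin: "\<And>y. y \<in> sphere 0 1 \<Longrightarrow> f u \<le> f y"
    using continuous_attains_inf[OF compact_sphere ne cf] by blast
  define m where "m = f u"
  have bound: "m * (x \<bullet> x) \<le> x \<bullet> (A *v x)" for x
  proof (cases "x = 0")
    case True then show ?thesis by simp
  next
    case False
    define y where "y = (1 / norm x) *\<^sub>R x"
    have "y \<in> sphere 0 1" using False unfolding y_def by simp
    then have "m \<le> f y" using umin unfolding m_def by blast
    also have "f y = f x / (norm x)^2" unfolding f_def y_def
      by (simp add: matrix_vector_mult_scaleR power2_eq_square)
    finally have "m * (norm x)^2 \<le> f x" using False by (simp add: field_simps)
    then show ?thesis unfolding f_def by (simp add: power2_norm_eq_inner)
  qed
  define B where "B = A - m *\<^sub>R mat 1"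
  have Bv: "B *v x = A *v x - m *\<^sub>R x" for x
    unfolding B_def by (simp add: matrix_vector_mult_diff_rdistrib flip: scaleR_matrix_vector_assoc)
  have SB: "symmetric_mat B" using S unfolding sym_entries B_def by (simp add: mat_def)
  have psd: "x \<bullet> (B *v x) \<ge> 0" for x using bound[of x] unfolding Bv by (simp add: inner_diff_right)
  have u0: "u \<bullet> (B *v u) = 0" unfolding Bv m_def f_def using u
    by (simp add: inner_diff_right dot_square_norm)
  have "B *v u = 0" by (rule psd_zero[OF SB psd u0])
  then have "A *v u = m *\<^sub>R u" unfolding Bv by simp
  moreover have "u \<noteq> 0" using u by auto
  ultimately have "mat_eigenvalue A m" unfolding mat_eigenvalue_def by blast
  then show ?thesis using bound by blast
qed

lemma eig_rayleigh:
  assumes "mat_eigenvalue A \<mu>"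
  shows "\<exists>v. v \<noteq> 0 \<and> v \<bullet> (A *v v) = \<mu> * (v \<bullet> v)"
  using assms unfolding mat_eigenvalue_def by auto

lemma lam_min:
  fixes A :: "real^'n^'n"
  assumes S: "symmetric_mat A"
  shows "mat_eigenvalue A (lambda_min A) \<and> (\<forall>x. lambda_min A * (x \<bullet> x) \<le> x \<bullet> (A *v x))"
proof -
  obtain m where m: "mat_eigenvalue A m" and b: "\<forall>x. m * (x \<bullet> x) \<le> x \<bullet> (A *v x)"
    using rayleigh_min_exists[OF S] by blast
  have "lambda_min A = m" unfolding lambda_min_def
  proof (rule Min_eqI)
    show "finite {\<mu>. mat_eigenvalue A \<mu>}" by (rule eig_finite[OF S])
    show "m \<in> {\<mu>. mat_eigenvalue A \<mu>}" using m by simp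
    fix y assume "y \<in> {\<mu>. mat_eigenvalue A \<mu>}"
    then obtain v where v: "v \<noteq> 0" "v \<bullet> (A *v v) = y * (v \<bullet> v)" using eig_rayleigh by blast
    have "m * (v \<bullet> v) \<le> y * (v \<bullet> v)" using b v by metis
    then show "m \<le> y" using v(1) by simp
  qed
  then show ?thesis using m b by simp
qed

lemma lam_max:
  fixes A :: "real^'n^'n"
  assumes S: "symmetric_mat A"
  shows "mat_eigenvalue A (lambda_max A) \<and> (\<forall>x. x \<bullet> (A *v x) \<le> lambda_max A * (x \<bullet> x))"
proof -
  have S': "symmetric_mat (- A)" using S unfolding sym_entries by simp
  obtain m where m: "mat_eigenvalue (- A) m" and b: "\<forall>x. m * (x \<bullet> x) \<le> x \<bullet> ((- A) *v x)"
    using rayleigh_min_exists[OF S'] by blast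
  have m': "mat_eigenvalue A (- m)" using m unfolding mat_eigenvalue_def neg_mv
    by (metis minus_equation_iff scaleR_minus_left)
  have b': "\<forall>x. x \<bullet> (A *v x) \<le> (- m) * (x \<bullet> x)" using b unfolding neg_mv by (simp add: inner_minus_right) (metis le_minus_iff)
  have "lambda_max A = - m" unfolding lambda_max_def
  proof (rule Max_eqI)
    show "finite {\<mu>. mat_eigenvalue A \<mu>}" by (rule eig_finite[OF S])
    show "- m \<in> {\<mu>. mat_eigenvalue A \<mu>}" using m' by simp
    fix y assume "y \<in> {\<mu>. mat_eigenvalue A \<mu>}"
    then obtain v where v: "v \<noteq> 0" "v \<bullet> (A *v v) = y * (v \<bullet> v)" using eig_rayleigh by blast
    have "y * (v \<bullet> v) \<le> (- m) * (v \<bullet> v)" using b' v by metis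
    moreover have "v \<bullet> v > 0" using v(1) by simp
    ultimately show "y \<le> - m" by (metis mult_minus_left mult_le_cancel_right_pos)
  qed
  then show ?thesis using m' b' by simp
qed

lemma ge_lam_min:
  assumes S: "symmetric_mat A" and c: "\<And>x. c * (x \<bullet> x) \<le> x \<bullet> (A *v x)"
  shows "c \<le> lambda_min A"
proof -
  obtain v where v: "v \<noteq> 0" "v \<bullet> (A *v v) = lambda_min A * (v \<bullet> v)"
    using lam_min[OF S] eig_rayleigh by blast
  have "c * (v \<bullet> v) \<le> lambda_min A * (v \<bullet> v)" using c[of v] v by simp
  then show ?thesis using v(1) by simp
qed

lemma le_lam_max:
  assumes S: "symmetric_mat A" and c: "\<And>x. x \<bullet> (A *v x) \<le> c * (x \<bullet> x)"
  shows "lambda_max A \<le> c"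
proof -
  obtain v where v: "v \<noteq> 0" "v \<bullet> (A *v v) = lambda_max A * (v \<bullet> v)"
    using lam_max[OF S] eig_rayleigh by blast
  have "lambda_max A * (v \<bullet> v) \<le> c * (v \<bullet> v)" using c[of v] v by simp
  then show ?thesis using v(1) by simp
qed



lemma sum_pair: "sum f (UNIV :: ('a::finite \<times> 'b::finite) set) = (\<Sum>j\<in>UNIV. \<Sum>a\<in>UNIV. f (j,a))"
  by (simp add: sum.cartesian_product UNIV_Times_UNIV[symmetric] del: UNIV_Times_UNIV)

lemma sum_mv: "(\<Sum>i\<in>S. M i) *v (x::real^'n) = (\<Sum>i\<in>S. M i *v x)"
  by (induct S rule: infinite_finite_induct) (auto simp: matrix_vector_mult_add_rdistrib)

lemma swap3: "(\<Sum>a\<in>A. \<Sum>c\<in>C. \<Sum>b\<in>B. f a c b) = (\<Sum>c\<in>C. \<Sum>b\<in>B. \<Sum>a\<in>A. f a c b)"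
proof -
  have "(\<Sum>a\<in>A. \<Sum>c\<in>C. \<Sum>b\<in>B. f a c b) = (\<Sum>c\<in>C. \<Sum>a\<in>A. \<Sum>b\<in>B. f a c b)" by (rule sum.swap)
  also have "\<dots> = (\<Sum>c\<in>C. \<Sum>b\<in>B. \<Sum>a\<in>A. f a c b)" by (intro sum.cong refl) (rule sum.swap)
  finally show ?thesis .
qed

lemma kron_outer:
  fixes A :: "real^'n^'n" and w :: "real^'k" and x :: "real^('n\<times>'k)"
  shows "x \<bullet> (kron A (outer w) *v x) = (\<chi> j. \<Sum>a\<in>UNIV. x$(j,a) * w$a) \<bullet> (A *v (\<chi> j. \<Sum>a\<in>UNIV. x$(j,a) * w$a))"
proof -
  have "x \<bullet> (kron A (outer w) *v x) = (\<Sum>j\<in>UNIV. \<Sum>a\<in>UNIV. x$(j,a) * (\<Sum>j'\<in>UNIV. \<Sum>b\<in>UNIV. A$j$j' * (w$a * w$b) * x$(j',b)))"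
    by (simp add: inner_vec_def matrix_vector_mult_def kron_def outer_def sum_pair)
  also have "\<dots> = (\<Sum>j\<in>UNIV. \<Sum>a\<in>UNIV. \<Sum>j'\<in>UNIV. \<Sum>b\<in>UNIV. (x$(j,a) * w$a) * (A$j$j' * (x$(j',b) * w$b)))"
    by (simp add: sum_distrib_left) (intro sum.cong refl; simp add: mult_ac)
  also have "\<dots> = (\<Sum>j\<in>UNIV. \<Sum>j'\<in>UNIV. \<Sum>b\<in>UNIV. \<Sum>a\<in>UNIV. (x$(j,a) * w$a) * (A$j$j' * (x$(j',b) * w$b)))"
    by (intro sum.cong refl, rule swap3)
  also have "\<dots> = (\<Sum>j\<in>UNIV. (\<Sum>a\<in>UNIV. x$(j,a) * w$a) * (\<Sum>j'\<in>UNIV. A$j$j' * (\<Sum>b\<in>UNIV. x$(j',b) * w$b)))"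
    by (simp add: sum_distrib_left sum_distrib_right)
  finally show ?thesis by (simp add: inner_vec_def matrix_vector_mult_def)
qed

lemma kron_id:
  fixes A :: "real^'n^'n" and x :: "real^('n\<times>'k::finite)"
  shows "x \<bullet> (kron A (mat 1) *v x) = (\<Sum>a\<in>UNIV. (\<chi> j. x$(j,a)) \<bullet> (A *v (\<chi> j. x$(j,a))))"
proof -
  have "x \<bullet> (kron A (mat 1) *v x) = (\<Sum>j\<in>UNIV. \<Sum>a\<in>UNIV. x$(j,a) * (\<Sum>j'\<in>UNIV. \<Sum>b\<in>UNIV. A$j$j' * (mat 1 :: real^'k^'k)$a$b * x$(j',b)))"
    by (simp add: inner_vec_def matrix_vector_mult_def kron_def sum_pair)
  also have "\<dots> = (\<Sum>j\<in>UNIV. \<Sum>a\<in>UNIV. x$(j,a) * (\<Sum>j'\<in>UNIV. A$j$j' * x$(j',a)))"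
    by (intro sum.cong refl arg_cong2[where f="(*)"]) (simp add: mat_def if_distrib if_distribR sum.delta cong: if_cong)
  also have "\<dots> = (\<Sum>a\<in>UNIV. \<Sum>j\<in>UNIV. x$(j,a) * (\<Sum>j'\<in>UNIV. A$j$j' * x$(j',a)))"
    by (rule sum.swap)
  also have "\<dots> = (\<Sum>a\<in>UNIV. (\<chi> j. x$(j,a)) \<bullet> (A *v (\<chi> j. x$(j,a))))"
    by (simp add: inner_vec_def matrix_vector_mult_def)
  finally show ?thesis .
qed

lemma inner_pair1:
  fixes x :: "real^('n::finite\<times>'k::finite)"
  shows "x \<bullet> x = (\<Sum>a\<in>UNIV. (\<chi> j. x$(j,a)) \<bullet> (\<chi> j. x$(j,a)))"
  unfolding inner_vec_def sum_pair by simp (rule sum.swap)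

lemma inner_pair2:
  fixes x :: "real^('n::finite\<times>'k::finite)"
  shows "x \<bullet> x = (\<Sum>j\<in>UNIV. (\<chi> a. x$(j,a)) \<bullet> (\<chi> a. x$(j,a)))"
  unfolding inner_vec_def sum_pair by simp



lemma gram_form: "x \<bullet> ((transpose B ** B) *v x) = (B *v x) \<bullet> (B *v (x::real^'n))"
proof -
  have "x \<bullet> ((transpose B ** B) *v x) = x \<bullet> (transpose B *v (B *v x))"
    by (simp only: matrix_vector_mul_assoc)
  also have "\<dots> = (B *v x) \<bullet> (B *v x)" using dot_lmul_matrix[of "B *v x" B x]
    by (simp add: inner_commute)
  finally show ?thesis .
qed

lemma sym_gram: "symmetric_mat (transpose B ** B)"
  unfolding symmetric_mat_def by (simp add: matrix_transpose_mul)

lemma psd_lams: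
  assumes S: "symmetric_mat A" and p: "\<And>x. 0 \<le> x \<bullet> (A *v x)"
  shows "0 \<le> lambda_min A" "0 \<le> lambda_max A"
proof -
  show 1: "0 \<le> lambda_min A" by (rule ge_lam_min[OF S]) (simp add: p)
  obtain v where v: "v \<noteq> 0" "v \<bullet> (A *v v) = lambda_max A * (v \<bullet> v)"
    using lam_max[OF S] eig_rayleigh by blast
  have "0 \<le> lambda_max A * (v \<bullet> v)" using p[of v] v by simp
  moreover have "v \<bullet> v > 0" using v(1) by simp
  ultimately show "0 \<le> lambda_max A" by (simp add: zero_le_mult_iff)
qed

lemma min_le_max:
  assumes S: "symmetric_mat A"
  shows "lambda_min A \<le> lambda_max A"
proof -
  obtain v where v: "v \<noteq> 0" "v \<bullet> (A *v v) = lambda_min A * (v \<bullet> v)"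
    using lam_min[OF S] eig_rayleigh by blast
  have "lambda_min A * (v \<bullet> v) \<le> lambda_max A * (v \<bullet> v)" using lam_max[OF S] v by metis
  then show ?thesis using v(1) by simp
qed

lemma diag_mv: "diag_mat s *v y = (\<chi> j. s$j * y$j)"
  by (simp add: vec_eq_iff matrix_vector_mult_def diag_mat_def if_distrib if_distribR sum.delta cong: if_cong)

lemma sym_diag: "symmetric_mat (diag_mat s)"
  unfolding sym_entries diag_mat_def by simp

lemma diag_bounds:
  fixes s y :: "real^'n"
  assumes s: "\<And>j. s$j \<in> {\<alpha>, 1}" and a: "0 \<le> \<alpha>" "\<alpha> \<le> 1"
  shows "\<alpha>^2 * (y \<bullet> y) \<le> (diag_mat s *v y) \<bullet> (diag_mat s *v y)"
    and "(diag_mat s *v y) \<bullet> (diag_mat s *v y) \<le> y \<bullet> y"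
proof -
  have e: "(diag_mat s *v y) \<bullet> (diag_mat s *v y) = (\<Sum>j\<in>UNIV. (s$j)^2 * (y$j)^2)"
    by (simp add: diag_mv inner_vec_def power2_eq_square mult_ac)
  have yy: "y \<bullet> y = (\<Sum>j\<in>UNIV. (y$j)^2)" by (simp add: inner_vec_def power2_eq_square)
  have a2: "\<alpha>^2 \<le> 1" using a by (simp add: power_le_one)
  have sj: "\<alpha>^2 \<le> (s$j)^2 \<and> (s$j)^2 \<le> 1" for j using s[of j] a2 by auto
  show "\<alpha>^2 * (y \<bullet> y) \<le> (diag_mat s *v y) \<bullet> (diag_mat s *v y)"
    unfolding e yy sum_distrib_left by (intro sum_mono mult_right_mono) (use sj in auto)
  show "(diag_mat s *v y) \<bullet> (diag_mat s *v y) \<le> y \<bullet> y"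
    unfolding e yy by (intro sum_mono) (use sj in \<open>auto intro: mult_left_le_one_le\<close>)
qed

lemma term_form:
  assumes D: "symmetric_mat D"
  shows "y \<bullet> ((D ** transpose X ** X ** D) *v y) = (D *v y) \<bullet> ((transpose X ** X) *v (D *v y))"
proof -
  have "(D ** transpose X ** X ** D) *v y = D *v ((transpose X ** X) *v (D *v y))"
    by (simp add: matrix_vector_mul_assoc[symmetric])
  then show ?thesis using sym_inner[OF D] by simp
qed

lemma sym_DXOXD:
  assumes "symmetric_mat D" "symmetric_mat Om"
  shows "symmetric_mat (D ** transpose X ** Om ** X ** D)"
  using assms unfolding symmetric_mat_def by (simp add: matrix_transpose_mul matrix_mul_assoc)

lemma sym_DXXD:
  assumes "symmetric_mat D"
  shows "symmetric_mat (D ** transpose X ** X ** D)"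
  using assms unfolding symmetric_mat_def by (simp add: matrix_transpose_mul matrix_mul_assoc)

lemma sym_outer: "symmetric_mat (outer u)"
  unfolding sym_entries outer_def by (simp add: mult.commute)

lemma sym_id: "symmetric_mat (mat 1)"
  unfolding sym_entries mat_def by simp

lemma sym_kron: "symmetric_mat A \<Longrightarrow> symmetric_mat B \<Longrightarrow> symmetric_mat (kron A B)"
  unfolding sym_entries kron_def by simp

lemma sym_sum: "(\<And>i. i \<in> S \<Longrightarrow> symmetric_mat (f i)) \<Longrightarrow> symmetric_mat (sum f S)"
  unfolding sym_entries by (simp add: sum_component)

lemma sym_plus: "symmetric_mat A \<Longrightarrow> symmetric_mat B \<Longrightarrow> symmetric_mat (A + B)"
  unfolding sym_entries by simp

lemma W_sum:
  fixes W :: "real^'m^'k" and x :: "real^('n::finite\<times>'k)"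
  shows "(\<Sum>i\<in>UNIV. (\<chi> j. \<Sum>a\<in>UNIV. x$(j,a) * column i W $ a) \<bullet> (\<chi> j. \<Sum>a\<in>UNIV. x$(j,a) * column i W $ a))
       = (\<Sum>j\<in>UNIV. (\<chi> a. x$(j,a)) \<bullet> ((W ** transpose W) *v (\<chi> a. x$(j,a))))"
proof -
  have "W ** transpose W = transpose (transpose W) ** transpose W" by simp
  then have g: "u \<bullet> ((W ** transpose W) *v u) = (transpose W *v u) \<bullet> (transpose W *v u)" for u
    using gram_form[of u "transpose W"] by simp
  show ?thesis unfolding g unfolding inner_vec_def
    apply (simp add: column_def matrix_vector_mult_def transpose_def)
    apply (rule trans[OF sum.swap])
    apply (simp add: mult.commute)
    done
qed

theorem mainTheorem5:
  fixes \<alpha> :: real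
    and X :: "real^'n^'d" and V :: "real^'d^'m" and W :: "real^'m^'k"
    and Lam :: "'m \<Rightarrow> real^'n^'n"
    and \<Gamma> :: "real^'n^'n"
    and G :: "real^('n \<times> 'k)^('n \<times> 'k)"
  assumes alpha: "0 \<le> \<alpha>" "\<alpha> \<le> 1"
    and Lam_def: "\<And>i. \<exists>s. Lam i = diag_mat s \<and>
                    (\<forall>j. leaky_relu_deriv_choice \<alpha> ((transpose X *v row i V) $ j) (s $ j))"
    and Gamma_def: "\<Gamma> = (\<Sum>i\<in>UNIV. Lam i ** transpose X ** outer (row i V) ** X ** Lam i)"
    and G_def: "G = (\<Sum>i\<in>UNIV. kron (Lam i ** transpose X ** X ** Lam i) (outer (column i W)))
                    + kron \<Gamma> (mat 1)"
    and pos: "\<alpha>\<^sup>2 * sigma_min_sq_X X * sigma_min_sq_W W + lambda_min \<Gamma> > 0"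
  shows "pos_def G \<and>
         cond_num G \<le> (sigma_max_sq_X X * sigma_max_sq_W W + lambda_max \<Gamma>) /
                       (\<alpha>\<^sup>2 * sigma_min_sq_X X * sigma_min_sq_W W + lambda_min \<Gamma>)"
proof -
  define L where "L = \<alpha>\<^sup>2 * sigma_min_sq_X X * sigma_min_sq_W W + lambda_min \<Gamma>"
  define U where "U = sigma_max_sq_X X * sigma_max_sq_W W + lambda_max \<Gamma>"
  obtain s where s: "\<And>i. Lam i = diag_mat (s i) \<and>
      (\<forall>j. leaky_relu_deriv_choice \<alpha> ((transpose X *v row i V) $ j) (s i $ j))"
    using Lam_def by metis
  have sv: "s i $ j \<in> {\<alpha>, 1}" for i j using s[of i] unfolding leaky_relu_deriv_choice_def by blast
  have symL: "symmetric_mat (Lam i)" for i using s[of i] sym_diag by metis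
  have symG: "symmetric_mat \<Gamma>" unfolding Gamma_def
    by (intro sym_sum sym_DXOXD symL sym_outer)
  have symGG: "symmetric_mat G" unfolding G_def
    by (intro sym_plus sym_sum sym_kron sym_DXXD symL sym_outer sym_id symG)
  have SX: "symmetric_mat (transpose X ** X)" by (rule sym_gram)
  have SW: "symmetric_mat (W ** transpose W)" using sym_gram[of "transpose W"] by simp
  have psdX: "0 \<le> z \<bullet> ((transpose X ** X) *v z)" for z unfolding gram_form by simp
  have psdW: "0 \<le> z \<bullet> ((W ** transpose W) *v z)" for z
    using gram_form[of z "transpose W"] by simp
  have xmin0: "0 \<le> sigma_min_sq_X X" "0 \<le> sigma_max_sq_X X"
    unfolding sigma_min_sq_X_def sigma_max_sq_X_def using psd_lams[OF SX psdX] by auto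
  have bX: "sigma_min_sq_X X * (p \<bullet> p) \<le> p \<bullet> ((transpose X ** X) *v p)"
           "p \<bullet> ((transpose X ** X) *v p) \<le> sigma_max_sq_X X * (p \<bullet> p)" for p
    unfolding sigma_min_sq_X_def sigma_max_sq_X_def using lam_min[OF SX] lam_max[OF SX] by auto
  have bW: "sigma_min_sq_W W * (p \<bullet> p) \<le> p \<bullet> ((W ** transpose W) *v p)"
           "p \<bullet> ((W ** transpose W) *v p) \<le> sigma_max_sq_W W * (p \<bullet> p)" for p
    unfolding sigma_min_sq_W_def sigma_max_sq_W_def using lam_min[OF SW] lam_max[OF SW] by auto
  have bG: "lambda_min \<Gamma> * (p \<bullet> p) \<le> p \<bullet> (\<Gamma> *v p)"
           "p \<bullet> (\<Gamma> *v p) \<le> lambda_max \<Gamma> * (p \<bullet> p)" for p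
    using lam_min[OF symG] lam_max[OF symG] by auto
  have bounds: "L * (x \<bullet> x) \<le> x \<bullet> (G *v x) \<and> x \<bullet> (G *v x) \<le> U * (x \<bullet> x)" for x
  proof -
    define y where "y i = (\<chi> j. \<Sum>a\<in>UNIV. x$(j,a) * column i W $ a)" for i
    define p where "p i = Lam i *v y i" for i
    define z where "z a = (\<chi> j. x$(j,a))" for a
    define S1 where "S1 = (\<Sum>i\<in>UNIV. p i \<bullet> ((transpose X ** X) *v p i))"
    define S2 where "S2 = (\<Sum>a\<in>UNIV. z a \<bullet> (\<Gamma> *v z a))"
    define Y where "Y = (\<Sum>i\<in>UNIV. y i \<bullet> y i)"
    have eq: "x \<bullet> (G *v x) = S1 + S2"
    proof -
      have "x \<bullet> (G *v x) = (\<Sum>i\<in>UNIV. x \<bullet> (kron (Lam i ** transpose X ** X ** Lam i) (outer (column i W)) *v x))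
          + x \<bullet> (kron \<Gamma> (mat 1) *v x)"
        unfolding G_def by (simp add: matrix_vector_mult_add_rdistrib sum_mv inner_add_right inner_sum_right)
      also have "\<dots> = S1 + S2"
        unfolding S1_def S2_def kron_outer kron_id p_def y_def z_def term_form[OF symL] ..
      finally show ?thesis .
    qed
    have Yeq: "Y = (\<Sum>j\<in>UNIV. (\<chi> a. x$(j,a)) \<bullet> ((W ** transpose W) *v (\<chi> a. x$(j,a))))"
      unfolding Y_def y_def by (rule W_sum)
    have xx2: "x \<bullet> x = (\<Sum>j\<in>UNIV. (\<chi> a. x$(j,a)) \<bullet> (\<chi> a. x$(j,a)))" by (rule inner_pair2)
    have xx1: "x \<bullet> x = (\<Sum>a\<in>UNIV. z a \<bullet> z a)" unfolding z_def by (rule inner_pair1)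
    have Ylo: "sigma_min_sq_W W * (x \<bullet> x) \<le> Y"
      unfolding Yeq xx2 sum_distrib_left by (intro sum_mono bW)
    have Yhi: "Y \<le> sigma_max_sq_W W * (x \<bullet> x)"
      unfolding Yeq xx2 sum_distrib_left by (intro sum_mono bW)
    have S2lo: "lambda_min \<Gamma> * (x \<bullet> x) \<le> S2"
      unfolding S2_def xx1 sum_distrib_left by (intro sum_mono bG)
    have S2hi: "S2 \<le> lambda_max \<Gamma> * (x \<bullet> x)"
      unfolding S2_def xx1 sum_distrib_left by (intro sum_mono bG)
    have plo: "\<alpha>^2 * (y i \<bullet> y i) \<le> p i \<bullet> p i" and phi: "p i \<bullet> p i \<le> y i \<bullet> y i" for i
      unfolding p_def using s[of i] diag_bounds[OF _ alpha, of "s i" "y i"] sv by auto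
    have S1lo: "\<alpha>^2 * sigma_min_sq_X X * Y \<le> S1"
    proof -
      have "\<alpha>^2 * sigma_min_sq_X X * Y = (\<Sum>i\<in>UNIV. sigma_min_sq_X X * (\<alpha>^2 * (y i \<bullet> y i)))"
        unfolding Y_def sum_distrib_left by (simp add: mult_ac)
      also have "\<dots> \<le> (\<Sum>i\<in>UNIV. sigma_min_sq_X X * (p i \<bullet> p i))"
        by (intro sum_mono mult_left_mono plo xmin0)
      also have "\<dots> \<le> S1" unfolding S1_def by (intro sum_mono bX)
      finally show ?thesis .
    qed
    have S1hi: "S1 \<le> sigma_max_sq_X X * Y"
    proof -
      have "S1 \<le> (\<Sum>i\<in>UNIV. sigma_max_sq_X X * (p i \<bullet> p i))" unfolding S1_def by (intro sum_mono bX)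
      also have "\<dots> \<le> (\<Sum>i\<in>UNIV. sigma_max_sq_X X * (y i \<bullet> y i))"
        by (intro sum_mono mult_left_mono phi xmin0)
      also have "\<dots> = sigma_max_sq_X X * Y" unfolding Y_def sum_distrib_left ..
      finally show ?thesis .
    qed
    have a2: "0 \<le> \<alpha>^2 * sigma_min_sq_X X" using xmin0 by simp
    have "L * (x \<bullet> x) = \<alpha>^2 * sigma_min_sq_X X * (sigma_min_sq_W W * (x \<bullet> x)) + lambda_min \<Gamma> * (x \<bullet> x)"
      unfolding L_def by (simp add: algebra_simps)
    also have "\<dots> \<le> \<alpha>^2 * sigma_min_sq_X X * Y + S2" using mult_left_mono[OF Ylo a2] S2lo by linarith
    also have "\<dots> \<le> x \<bullet> (G *v x)" using S1lo eq by linarith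
    finally have lo: "L * (x \<bullet> x) \<le> x \<bullet> (G *v x)" .
    have "x \<bullet> (G *v x) \<le> sigma_max_sq_X X * Y + lambda_max \<Gamma> * (x \<bullet> x)" using eq S1hi S2hi by linarith
    also have "\<dots> \<le> sigma_max_sq_X X * (sigma_max_sq_W W * (x \<bullet> x)) + lambda_max \<Gamma> * (x \<bullet> x)"
      using mult_left_mono[OF Yhi xmin0(2)] by linarith
    also have "\<dots> = U * (x \<bullet> x)" unfolding U_def by (simp add: algebra_simps)
    finally show ?thesis using lo by simp
  qed
  have Lpos: "L > 0" using pos unfolding L_def .
  have pd: "pos_def G" unfolding pos_def_def
  proof (intro conjI symGG allI impI)
    fix x :: "real^('n \<times> 'k)" assume "x \<noteq> 0"
    then have "x \<bullet> x > 0" by simp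
    then have "L * (x \<bullet> x) > 0" using Lpos by simp
    then show "x \<bullet> (G *v x) > 0" using bounds[of x] by linarith
  qed
  have lmin: "L \<le> lambda_min G" by (rule ge_lam_min[OF symGG]) (use bounds in blast)
  have lmax: "lambda_max G \<le> U" by (rule le_lam_max[OF symGG]) (use bounds in blast)
  have mm: "lambda_min G \<le> lambda_max G" by (rule min_le_max[OF symGG])
  have "cond_num G \<le> U / L" unfolding cond_num_def
    by (rule frac_le) (use lmin lmax mm Lpos in auto)
  then show ?thesis using pd unfolding U_def L_def by simp
qed


end
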